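(* Let $f:\mathbb{R}\to\mathbb{C}$ be a Lebesgue measurable function which is not zero almost everywhere and which has faster than exponential decay, i.e. $\lim_{x\to\infty}|f(x)|e^{cx}=0$ for every $c>0$. Then for every $b>0$, $\mathcal G(f,\mathbb{R}\times b\mathbb{Z})$ is linearly independent.
   Context: For $a,t\in\mathbb{R}$, $M_aT_tf(x)=e^{2\pi i a x}f(x-t)$, and $\mathcal G(f,\mathbb{R}\times b\mathbb{Z})=\{M_aT_tf: a\in\mathbb{R},\ t\in b\mathbb{Z}\}$. Measurable functions equal a.e. are identified; this system is linearly independent if every finite linear combination of its elements over distinct pairs $(a,t)$ with coefficients not all zero is not zero almost everywhere. *)

theory Defs
  imports "HOL-Analysis.Analysis"
begin

definition MT :: "real \<Rightarrow> real \<Rightarrow> (real \<Rightarrow> complex) \<Rightarrow> real \<Rightarrow> complex" where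
  "MT a t f x = exp (2 * complex_of_real pi * \<i> * complex_of_real a * complex_of_real x) * f (x - t)"

definition gabor_lin_indep :: "(real \<Rightarrow> complex) \<Rightarrow> real \<Rightarrow> bool" where
  "gabor_lin_indep f b \<longleftrightarrow>
     (\<forall>S (c :: real \<times> real \<Rightarrow> complex).
        finite S \<and> S \<subseteq> UNIV \<times> {t. \<exists>k::int. t = b * of_int k} \<and> (\<exists>p\<in>S. c p \<noteq> 0) \<longrightarrow>
        \<not> (AE x in lebesgue. (\<Sum>p\<in>S. c p * MT (fst p) (snd p) f x) = 0))"

end

theory Submission
  imports Defs "HOL-Computational_Algebra.Polynomial"
begin


lemma sub_base:
  fixes g0 g1 :: "real \<Rightarrow> real"
  assumes d: "\<And>x. (g0 has_real_derivative g1 x) (at x)"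
    and eta: "\<eta> > 0" and lb: "\<forall>x\<in>{a..b}. \<eta> \<le> \<bar>g1 x\<bar>"
  shows "\<exists>x0. {x\<in>{a..b}. \<bar>g0 x\<bar> < \<delta>} \<subseteq> {x0 - 2*\<delta>/\<eta> .. x0 + 2*\<delta>/\<eta>}"
proof (cases "{x\<in>{a..b}. \<bar>g0 x\<bar> < \<delta>} = {}")
  case True then show ?thesis by auto
next
  case False
  then obtain x0 where x0: "x0 \<in> {a..b}" "\<bar>g0 x0\<bar> < \<delta>" by auto
  have key: "\<eta> * \<bar>x - x0\<bar> \<le> \<bar>g0 x - g0 x0\<bar>" if x: "x \<in> {a..b}" for x
  proof -
    have gen: "\<eta> * (v - u) \<le> \<bar>g0 v - g0 u\<bar>" if "u \<in> {a..b}" "v \<in> {a..b}" "u < v" for u v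
    proof -
      obtain z where z: "u < z" "z < v" "g0 v - g0 u = (v - u) * g1 z"
        using MVT2[of u v g0 g1] d \<open>u < v\<close> by blast
      have "z \<in> {a..b}" using z that by auto
      hence "\<eta> \<le> \<bar>g1 z\<bar>" using lb by auto
      hence "\<eta> * (v - u) \<le> \<bar>g1 z\<bar> * (v - u)" using \<open>u<v\<close> by (intro mult_right_mono) auto
      also have "\<dots> = \<bar>g0 v - g0 u\<bar>" using z \<open>u<v\<close> by (simp add: abs_mult)
      finally show ?thesis .
    qed
    consider "x < x0" | "x = x0" | "x0 < x" by linarith
    then show ?thesis
    proof cases
      case 1 then show ?thesis using gen[of x x0] x x0 by (simp add: abs_minus_commute)
    next
      case 2 then show ?thesis by simp
    next
      case 3 then show ?thesis using gen[of x0 x] x x0 by simp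
    qed
  qed
  show ?thesis
  proof (intro exI subsetI)
    fix x assume "x \<in> {x\<in>{a..b}. \<bar>g0 x\<bar> < \<delta>}"
    hence x: "x \<in> {a..b}" "\<bar>g0 x\<bar> < \<delta>" by auto
    have "\<eta> * \<bar>x - x0\<bar> < 2 * \<delta>" using key[OF x(1)] x(2) x0(2) by linarith
    hence "\<bar>x - x0\<bar> < 2 * \<delta> / \<eta>" using eta by (simp add: field_simps)
    thus "x \<in> {x0 - 2*\<delta>/\<eta> .. x0 + 2*\<delta>/\<eta>}" by auto
  qed
qed

lemma sets_sub:
  fixes h :: "real \<Rightarrow> real"
  assumes "continuous_on UNIV h"
  shows "{x\<in>{a..b}. \<bar>h x\<bar> < \<delta>} \<in> sets lborel"
proof -
  have [measurable]: "h \<in> borel_measurable borel"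
    using assms by (intro borel_measurable_continuous_onI) auto
  show ?thesis by measurable
qed

lemma deriv_cont:
  assumes "\<And>x. (h has_real_derivative h' x) (at x)"
  shows "continuous_on UNIV h"
  using assms by (meson DERIV_isCont continuous_at_imp_continuous_on)

lemma sublevel:
  fixes g :: "nat \<Rightarrow> real \<Rightarrow> real"
  assumes d: "\<forall>i\<le>k. \<forall>x. (g i has_real_derivative g (Suc i) x) (at x)"
    and eta: "\<eta> > 0" and del: "\<delta> > 0" and lb: "\<forall>x\<in>{a..b}. \<eta> \<le> \<bar>g (Suc k) x\<bar>"
  shows "emeasure lborel {x\<in>{a..b}. \<bar>g 0 x\<bar> < \<delta>}
           \<le> ennreal ((12 * 2^k - 8) * (\<delta>/\<eta>) powr (1 / real (Suc k)))"
  using d eta lb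
proof (induction k arbitrary: a b \<eta>)
  case 0
  have d0: "\<And>x. (g 0 has_real_derivative g (Suc 0) x) (at x)" using "0.prems"(1) by auto
  obtain x0 where x0: "{x\<in>{a..b}. \<bar>g 0 x\<bar> < \<delta>} \<subseteq> {x0 - 2*\<delta>/\<eta> .. x0 + 2*\<delta>/\<eta>}"
    using sub_base[OF d0 "0.prems"(2), of a b \<delta>] "0.prems"(3) by blast
  have "emeasure lborel {x\<in>{a..b}. \<bar>g 0 x\<bar> < \<delta>} \<le> emeasure lborel {x0 - 2*\<delta>/\<eta> .. x0 + 2*\<delta>/\<eta>}"
    by (rule emeasure_mono[OF x0]) auto
  also have "\<dots> = ennreal (4 * (\<delta>/\<eta>))" using "0.prems"(2) del by (simp add: field_simps)
  finally show ?case using del "0.prems"(2) by simp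
next
  case (Suc k)
  have dk: "\<forall>i\<le>k. \<forall>x. (g i has_real_derivative g (Suc i) x) (at x)" using Suc.prems(1) by auto
  have IH: "\<And>a b \<eta>. 0 < \<eta> \<Longrightarrow> \<forall>x\<in>{a..b}. \<eta> \<le> \<bar>g (Suc k) x\<bar> \<Longrightarrow>
     emeasure lborel {x\<in>{a..b}. \<bar>g 0 x\<bar> < \<delta>} \<le> ennreal ((12 * 2^k - 8) * (\<delta>/\<eta>) powr (1 / real (Suc k)))"
    using Suc.IH dk by blast
  define t where "t = (\<delta>/\<eta>) powr (1 / real (Suc (Suc k)))"
  have tpos: "t > 0" unfolding t_def using del Suc.prems by simp
  have tpow: "t ^ (Suc (Suc k)) = \<delta>/\<eta>"
  proof -
    have "t ^ (Suc (Suc k)) = t powr (real (Suc (Suc k)))" using tpos by (simp only: powr_realpow)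
    also have "\<dots> = (\<delta>/\<eta>) powr (1 / real (Suc (Suc k)) * real (Suc (Suc k)))"
      unfolding t_def by (simp add: powr_powr del: of_nat_Suc)
    also have "\<dots> = \<delta>/\<eta>" using del Suc.prems(2) by simp
    finally show ?thesis .
  qed
  define \<alpha> where "\<alpha> = \<eta> * t"
  have apos: "\<alpha> > 0" unfolding \<alpha>_def using tpos Suc.prems by simp
  have dfa: "\<delta> / \<alpha> = t ^ Suc k" using tpow tpos Suc.prems(2) unfolding \<alpha>_def
    by (simp add: field_simps)
  have dfa2: "(\<delta> / \<alpha>) powr (1 / real (Suc k)) = t"
  proof -
    have "t ^ Suc k = t powr (real (Suc k))" using tpos by (simp only: powr_realpow)
    hence "(\<delta> / \<alpha>) powr (1 / real (Suc k)) = t powr (real (Suc k) * (1 / real (Suc k)))"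
      unfolding dfa by (simp only: powr_powr)
    also have "\<dots> = t" using tpos by simp
    finally show ?thesis .
  qed
  have d1: "\<And>x. (g (Suc k) has_real_derivative g (Suc (Suc k)) x) (at x)" using Suc.prems(1) by auto
  obtain x0 where x0: "{x\<in>{a..b}. \<bar>g (Suc k) x\<bar> < \<alpha>} \<subseteq> {x0 - 2*\<alpha>/\<eta> .. x0 + 2*\<alpha>/\<eta>}"
    using sub_base[OF d1 Suc.prems(2), of a b \<alpha>] Suc.prems(3) by blast
  have r: "2*\<alpha>/\<eta> = 2*t" unfolding \<alpha>_def using Suc.prems(2) by simp
  define S1 where "S1 = {x\<in>{a..min b (x0 - 4*t)}. \<bar>g 0 x\<bar> < \<delta>}"
  define S2 where "S2 = {x\<in>{max a (x0 + 4*t)..b}. \<bar>g 0 x\<bar> < \<delta>}"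
  have cont0: "continuous_on UNIV (g 0)" using Suc.prems(1) by (intro deriv_cont[of _ "g 1"]) auto
  have sub: "{x\<in>{a..b}. \<bar>g 0 x\<bar> < \<delta>} \<subseteq> S1 \<union> {x0 - 4*t .. x0 + 4*t} \<union> S2"
    unfolding S1_def S2_def by auto
  have lb1: "\<forall>x\<in>{a..min b (x0 - 4*t)}. \<alpha> \<le> \<bar>g (Suc k) x\<bar>"
  proof
    fix x assume x: "x \<in> {a..min b (x0 - 4*t)}"
    show "\<alpha> \<le> \<bar>g (Suc k) x\<bar>"
    proof (rule ccontr)
      assume "\<not> ?thesis"
      hence "x \<in> {x0 - 2*\<alpha>/\<eta> .. x0 + 2*\<alpha>/\<eta>}" using x0 x by auto
      thus False using x tpos r by auto
    qed
  qed
  have lb2: "\<forall>x\<in>{max a (x0 + 4*t)..b}. \<alpha> \<le> \<bar>g (Suc k) x\<bar>"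
  proof
    fix x assume x: "x \<in> {max a (x0 + 4*t)..b}"
    show "\<alpha> \<le> \<bar>g (Suc k) x\<bar>"
    proof (rule ccontr)
      assume "\<not> ?thesis"
      hence "x \<in> {x0 - 2*\<alpha>/\<eta> .. x0 + 2*\<alpha>/\<eta>}" using x0 x by auto
      thus False using x tpos r by auto
    qed
  qed
  have e1: "emeasure lborel S1 \<le> ennreal ((12 * 2^k - 8) * t)"
    using IH[OF apos lb1] unfolding S1_def dfa2 .
  have e2: "emeasure lborel S2 \<le> ennreal ((12 * 2^k - 8) * t)"
    using IH[OF apos lb2] unfolding S2_def dfa2 .
  have m1: "S1 \<in> sets lborel" unfolding S1_def by (rule sets_sub[OF cont0])
  have m2: "S2 \<in> sets lborel" unfolding S2_def by (rule sets_sub[OF cont0])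
  have "emeasure lborel {x\<in>{a..b}. \<bar>g 0 x\<bar> < \<delta>} \<le> emeasure lborel (S1 \<union> {x0 - 4*t .. x0 + 4*t} \<union> S2)"
    by (rule emeasure_mono[OF sub]) (use m1 m2 in auto)
  also have "\<dots> \<le> emeasure lborel (S1 \<union> {x0 - 4*t .. x0 + 4*t}) + emeasure lborel S2"
    by (rule emeasure_subadditive) (use m1 m2 in auto)
  also have "\<dots> \<le> emeasure lborel S1 + emeasure lborel {x0 - 4*t .. x0 + 4*t} + emeasure lborel S2"
    by (intro add_right_mono emeasure_subadditive) (use m1 in auto)
  also have "\<dots> \<le> ennreal ((12 * 2^k - 8) * t) + ennreal (8*t) + ennreal ((12 * 2^k - 8) * t)"
    using e1 e2 tpos by (intro add_mono) auto
  also have "\<dots> = ennreal ((12 * 2^(Suc k) - 8) * t)"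
  proof -
    have p: "(12 * 2^k - 8::real) \<ge> 0" by (induction k) auto
    show ?thesis using p tpos by (simp add: ennreal_plus[symmetric] algebra_simps del: ennreal_plus)
  qed
  finally show ?case unfolding t_def .
qed



definition es :: "'a set \<Rightarrow> ('a \<Rightarrow> complex) \<Rightarrow> ('a \<Rightarrow> real) \<Rightarrow> nat \<Rightarrow> real \<Rightarrow> complex" where
  "es A d \<omega> k y = (\<Sum>a\<in>A. d a * (\<i> * of_real (\<omega> a))^k * exp (\<i> * of_real (\<omega> a) * of_real y))"

lemma exp_vd:
  fixes c :: complex
  shows "((\<lambda>y. exp (c * of_real (y + v))) has_vector_derivative (c * exp (c * of_real (y + v)))) (at y)"
proof -
  have "((\<lambda>z. exp (c * (z + of_real v))) has_field_derivative (c * exp (c * (of_real y + of_real v)))) (at (of_real y))"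
    by (auto intro!: derivative_eq_intros)
  from has_vector_derivative_real_field[OF this, where s=UNIV]
  show ?thesis by simp
qed

lemma es_vd:
  "((\<lambda>y. es A d \<omega> k (y + v)) has_vector_derivative es A d \<omega> (Suc k) (y + v)) (at y)"
proof -
  have "((\<lambda>y. \<Sum>a\<in>A. d a * (\<i> * of_real (\<omega> a))^k * exp (\<i> * of_real (\<omega> a) * of_real (y + v)))
     has_vector_derivative (\<Sum>a\<in>A. d a * (\<i> * of_real (\<omega> a))^k * ((\<i> * of_real (\<omega> a)) * exp (\<i> * of_real (\<omega> a) * of_real (y + v))))) (at y)"
    by (intro has_vector_derivative_sum has_vector_derivative_mult_right exp_vd)
  thus ?thesis unfolding es_def by (simp add: algebra_simps)
qed

lemma es_rd:
  "((\<lambda>y. Re (w * es A d \<omega> k (y + v))) has_real_derivative Re (w * es A d \<omega> (Suc k) (y + v))) (at y)"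
  unfolding has_real_derivative_iff_has_vector_derivative
  by (intro bounded_linear.has_vector_derivative[OF bounded_linear_Re]
        has_vector_derivative_mult_right es_vd)

lemma es_bound:
  assumes "finite A"
  shows "cmod (es A d \<omega> k y) \<le> (\<Sum>a\<in>A. cmod (d a) * \<bar>\<omega> a\<bar>^k)"
  unfolding es_def
  by (rule order.trans[OF norm_sum]) (simp add: norm_mult norm_power)

lemma es_lower:
  assumes A: "finite A" and a1: "a1 \<in> A" and d1: "d a1 \<noteq> 0" and inj: "inj_on \<omega> A"
  shows "\<exists>\<eta>>0. \<exists>D. \<forall>x. \<exists>k\<le>D. \<eta> \<le> cmod (es A d \<omega> k x)"
proof -
  define c where "c a = \<i> * complex_of_real (\<omega> a)" for a
  define p where "p = (\<Prod>a\<in>A-{a1}. [:- c a, 1:])"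
  define D where "D = degree p"
  have pz: "poly p (c a) = 0" if "a \<in> A - {a1}" for a
    unfolding p_def poly_prod using that A by (auto intro!: prod_zero)
  have pn: "poly p (c a1) \<noteq> 0"
    unfolding p_def poly_prod using A a1 inj
    by (auto simp: c_def inj_on_def)
  define X where "X = cmod (d a1) * cmod (poly p (c a1))"
  have Xpos: "X > 0" unfolding X_def using d1 pn by simp
  define S where "S = (\<Sum>k\<le>D. cmod (coeff p k))"
  have S0: "S \<ge> 0" unfolding S_def by (auto intro: sum_nonneg)
  have ident: "(\<Sum>k\<le>D. coeff p k * es A d \<omega> k x) = d a1 * exp (c a1 * of_real x) * poly p (c a1)" for x
  proof -
    have "(\<Sum>k\<le>D. coeff p k * es A d \<omega> k x)
        = (\<Sum>a\<in>A. d a * exp (c a * of_real x) * (\<Sum>k\<le>D. coeff p k * c a ^ k))"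
      unfolding es_def c_def
      by (simp add: sum_distrib_left sum_distrib_right algebra_simps sum.swap[of _ "{..D}"])
    also have "\<dots> = (\<Sum>a\<in>A. d a * exp (c a * of_real x) * poly p (c a))"
      unfolding poly_altdef D_def by simp
    also have "\<dots> = d a1 * exp (c a1 * of_real x) * poly p (c a1)
        + (\<Sum>a\<in>A-{a1}. d a * exp (c a * of_real x) * poly p (c a))"
      using A a1 by (simp add: sum.remove)
    also have "(\<Sum>a\<in>A-{a1}. d a * exp (c a * of_real x) * poly p (c a)) = 0"
      using pz by (intro sum.neutral) auto
    finally show ?thesis by simp
  qed
  show ?thesis
  proof (rule exI[of _ "X / (2 * (S + 1))"], rule conjI)
    show "X / (2 * (S + 1)) > 0" using Xpos S0 by simp
    show "\<exists>D. \<forall>x. \<exists>k\<le>D. X / (2 * (S + 1)) \<le> cmod (es A d \<omega> k x)"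
    proof (rule exI[of _ D], rule allI)
    fix x
    show "\<exists>k\<le>D. X / (2 * (S + 1)) \<le> cmod (es A d \<omega> k x)"
    proof (rule ccontr)
      assume "\<not> ?thesis"
      hence lt: "\<And>k. k \<le> D \<Longrightarrow> cmod (es A d \<omega> k x) \<le> X / (2 * (S + 1))" by force
      have e1: "cmod (exp (c a1 * of_real x)) = 1" unfolding c_def by (simp add: norm_exp_eq_Re)
      have "X = cmod (\<Sum>k\<le>D. coeff p k * es A d \<omega> k x)"
        unfolding ident X_def norm_mult e1 by simp
      also have "\<dots> \<le> (\<Sum>k\<le>D. cmod (coeff p k) * cmod (es A d \<omega> k x))"
        by (rule order.trans[OF norm_sum]) (simp add: norm_mult)
      also have "\<dots> \<le> (\<Sum>k\<le>D. cmod (coeff p k) * (X / (2 * (S + 1))))"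
        by (intro sum_mono mult_left_mono lt) auto
      also have "\<dots> = S * (X / (2 * (S + 1)))" unfolding S_def by (rule sum_distrib_right[symmetric])
      also have "\<dots> < X" using S0 Xpos by (simp add: field_simps add_nonneg_pos)
      finally show False by simp
    qed
  qed
  qed
qed



lemma lip:
  fixes h h' :: "real \<Rightarrow> real"
  assumes d: "\<And>x. (h has_real_derivative h' x) (at x)" and b: "\<And>x. \<bar>h' x\<bar> \<le> B"
  shows "\<bar>h y - h z\<bar> \<le> B * \<bar>y - z\<bar>"
proof -
  have gen: "\<bar>h v - h u\<bar> \<le> B * (v - u)" if "u < v" for u v
  proof -
    obtain t where t: "u < t" "t < v" "h v - h u = (v - u) * h' t"
      using MVT2[of u v h h'] d \<open>u < v\<close> by blast
    have "\<bar>h v - h u\<bar> = (v - u) * \<bar>h' t\<bar>" using t \<open>u<v\<close> by (simp add: abs_mult)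
    also have "\<dots> \<le> (v - u) * B" using b \<open>u<v\<close> by (intro mult_left_mono) auto
    finally show ?thesis by (simp add: mult.commute)
  qed
  consider "y < z" | "y = z" | "z < y" by linarith
  then show ?thesis
  proof cases
    case 1 then show ?thesis using gen[of y z] by (simp add: abs_minus_commute)
  next
    case 2 then show ?thesis by simp
  next
    case 3 then show ?thesis using gen[of z y] by simp
  qed
qed

lemma local_sub:
  assumes A: "finite A" and kD: "k \<le> D" and eta: "\<eta> > 0" and del: "\<delta> > 0" "4 * \<delta> \<le> \<eta>"
    and Bm: "Bm > 0" "\<And>x. cmod (es A d \<omega> (Suc k) x) \<le> Bm"
    and x0: "\<eta> \<le> cmod (es A d \<omega> k (y0 + v))"
  shows "emeasure lborel {y\<in>{y0 - \<eta>/(4*Bm)..y0 + \<eta>/(4*Bm)}. cmod (es A d \<omega> 0 (y + v)) < \<delta>}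
     \<le> ennreal (12 * 2^D * (4*\<delta>/\<eta>) powr (1 / real (max 1 D)))"
proof -
  define \<rho> where "\<rho> = \<eta>/(4*Bm)"
  obtain w :: complex where w: "cmod w = 1" "\<eta>/2 \<le> \<bar>Re (w * es A d \<omega> k (y0 + v))\<bar>"
  proof -
    let ?z = "es A d \<omega> k (y0 + v)"
    have "\<eta> \<le> \<bar>Re ?z\<bar> + \<bar>Im ?z\<bar>" using x0 cmod_le[of ?z] by linarith
    hence "\<eta>/2 \<le> \<bar>Re (1 * ?z)\<bar> \<or> \<eta>/2 \<le> \<bar>Re (- \<i> * ?z)\<bar>" by auto
    thus ?thesis using that[of 1] that[of "- \<i>"] by auto
  qed
  define g where "g i y = Re (w * es A d \<omega> i (y + v))" for i y
  have gd: "\<And>i y. (g i has_real_derivative g (Suc i) y) (at y)"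
    unfolding g_def by (rule es_rd)
  have gb: "\<bar>g (Suc k) y\<bar> \<le> Bm" for y
  proof -
    have "\<bar>g (Suc k) y\<bar> \<le> cmod (w * es A d \<omega> (Suc k) (y + v))" unfolding g_def by (rule abs_Re_le_cmod)
    also have "\<dots> \<le> Bm" using w(1) Bm(2) by (simp add: norm_mult)
    finally show ?thesis .
  qed
  have lbk: "\<eta>/4 \<le> \<bar>g k y\<bar>" if y: "y \<in> {y0 - \<rho>..y0 + \<rho>}" for y
  proof -
    have "\<bar>g k y - g k y0\<bar> \<le> Bm * \<bar>y - y0\<bar>" by (rule lip[OF gd gb])
    also have "\<dots> \<le> Bm * \<rho>" using y Bm by (intro mult_left_mono) auto
    also have "\<dots> = \<eta>/4" unfolding \<rho>_def using Bm by simp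
    finally have "\<bar>g k y - g k y0\<bar> \<le> \<eta>/4" .
    moreover have "\<eta>/2 \<le> \<bar>g k y0\<bar>" using w(2) unfolding g_def by simp
    ultimately show ?thesis by linarith
  qed
  have sub: "{y\<in>{y0 - \<rho>..y0 + \<rho>}. cmod (es A d \<omega> 0 (y + v)) < \<delta>} \<subseteq> {y\<in>{y0 - \<rho>..y0 + \<rho>}. \<bar>g 0 y\<bar> < \<delta>}"
  proof -
    have "\<bar>g 0 y\<bar> \<le> cmod (es A d \<omega> 0 (y + v))" for y
    proof -
      have "\<bar>g 0 y\<bar> \<le> cmod (w * es A d \<omega> 0 (y + v))" unfolding g_def by (rule abs_Re_le_cmod)
      thus ?thesis using w(1) by (simp add: norm_mult)
    qed
    thus ?thesis by (auto intro: le_less_trans)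
  qed
  have cont0: "continuous_on UNIV (g 0)" by (rule deriv_cont[OF gd])
  have meas: "{y\<in>{y0 - \<rho>..y0 + \<rho>}. \<bar>g 0 y\<bar> < \<delta>} \<in> sets lborel" by (rule sets_sub[OF cont0])
  have q: "0 \<le> 4*\<delta>/\<eta>" "4*\<delta>/\<eta> \<le> 1" using del eta by auto
  have "emeasure lborel {y\<in>{y0 - \<rho>..y0 + \<rho>}. \<bar>g 0 y\<bar> < \<delta>} \<le> ennreal (12 * 2^D * (4*\<delta>/\<eta>) powr (1 / real (max 1 D)))"
  proof (cases k)
    case 0
    have "{y\<in>{y0 - \<rho>..y0 + \<rho>}. \<bar>g 0 y\<bar> < \<delta>} = {}" using lbk del 0 by force
    thus ?thesis by (simp only:) simp
  next
    case (Suc k')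
    have "emeasure lborel {y\<in>{y0 - \<rho>..y0 + \<rho>}. \<bar>g 0 y\<bar> < \<delta>}
        \<le> ennreal ((12 * 2^k' - 8) * (\<delta>/(\<eta>/4)) powr (1 / real (Suc k')))"
      by (rule sublevel) (use gd del eta lbk Suc in auto)
    also have "\<dots> \<le> ennreal (12 * 2^D * (4*\<delta>/\<eta>) powr (1 / real (max 1 D)))"
    proof (rule ennreal_leI, rule mult_mono)
      have "(2::real)^k' \<le> 2^D" using Suc kD by (intro power_increasing) auto
      thus "12 * 2^k' - 8 \<le> (12 * 2^D :: real)" by linarith
      have "\<delta>/(\<eta>/4) = 4*\<delta>/\<eta>" by simp
      moreover have "1 / real (max 1 D) \<le> 1 / real (Suc k')" using Suc kD
        by (intro divide_left_mono) auto
      ultimately show "(\<delta>/(\<eta>/4)) powr (1 / real (Suc k')) \<le> (4*\<delta>/\<eta>) powr (1 / real (max 1 D))"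
        using q powr_mono'[of "1 / real (max 1 D)" "1 / real (Suc k')" "4*\<delta>/\<eta>"] by (simp add: mult.commute)
      show "0 \<le> (12 * 2^D :: real)" by simp
      show "0 \<le> (\<delta>/(\<eta>/4)) powr (1 / real (Suc k'))" by simp
    qed
    finally show ?thesis .
  qed
  thus ?thesis using emeasure_mono[OF sub meas] unfolding \<rho>_def by (meson order.trans)
qed



lemma sets_sub2:
  fixes h :: "real \<Rightarrow> real"
  assumes "continuous_on UNIV h"
  shows "{x\<in>{a..b}. h x < \<delta>} \<in> sets lborel"
proof -
  have [measurable]: "h \<in> borel_measurable borel"
    using assms by (intro borel_measurable_continuous_onI) auto
  show ?thesis by measurable
qed

lemma es_cont: "continuous_on UNIV (\<lambda>y. cmod (es A d \<omega> k (y + v)))"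
proof -
  have "continuous_on UNIV (\<lambda>y. es A d \<omega> k (y + v))"
    by (intro continuous_at_imp_continuous_on ballI has_vector_derivative_continuous[OF es_vd])
  thus ?thesis by (intro continuous_on_norm)
qed

lemma es_cover:
  assumes A: "finite A" and eta: "\<eta> > 0" and low: "\<And>x. \<exists>k\<le>D. \<eta> \<le> cmod (es A d \<omega> k x)"
    and Bm: "Bm > 0" "\<And>k x. k \<le> D \<Longrightarrow> cmod (es A d \<omega> (Suc k) x) \<le> Bm"
    and del: "\<delta> > 0" "4 * \<delta> \<le> \<eta>" and R: "R \<ge> 0"
  shows "emeasure lborel {y\<in>{-R..R}. cmod (es A d \<omega> 0 (y + v)) < \<delta>}
     \<le> ennreal (real (Suc (nat \<lceil>2*R/(\<eta>/(4*Bm))\<rceil>)) * (12 * 2^D * (4*\<delta>/\<eta>) powr (1 / real (max 1 D))))"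
proof -
  define \<rho> where "\<rho> = \<eta>/(4*Bm)"
  have rho: "\<rho> > 0" unfolding \<rho>_def using eta Bm by simp
  define M where "M = nat \<lceil>2*R/\<rho>\<rceil>"
  define c where "c = 12 * 2^D * (4*\<delta>/\<eta>) powr (1 / real (max 1 D))"
  define P where "P m = {y\<in>{(-R + real m * \<rho>) - \<rho>..(-R + real m * \<rho>) + \<rho>}. cmod (es A d \<omega> 0 (y + v)) < \<delta>}" for m
  have sub: "{y\<in>{-R..R}. cmod (es A d \<omega> 0 (y + v)) < \<delta>} \<subseteq> (\<Union>m\<in>{..M}. P m)"
  proof
    fix y assume y: "y \<in> {y\<in>{-R..R}. cmod (es A d \<omega> 0 (y + v)) < \<delta>}"
    define m where "m = nat \<lfloor>(y + R)/\<rho>\<rfloor>"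
    have nn: "0 \<le> (y + R)/\<rho>" using y rho by auto
    have m1: "real m \<le> (y + R)/\<rho>" unfolding m_def using nn by linarith
    have m2: "(y + R)/\<rho> < real m + 1" unfolding m_def using nn by linarith
    have "real m * \<rho> \<le> y + R" using m1 rho by (simp add: field_simps)
    moreover have "y + R < real m * \<rho> + \<rho>" using m2 rho by (simp add: field_simps)
    moreover have "m \<le> M"
    proof -
      have "(y + R)/\<rho> \<le> 2*R/\<rho>" using y rho by (intro divide_right_mono) auto
      thus ?thesis unfolding m_def M_def by (intro nat_mono) linarith
    qed
    ultimately show "y \<in> (\<Union>m\<in>{..M}. P m)" unfolding P_def using y by (intro UN_I[of m]) auto
  qed
  have meas: "P m \<in> sets lborel" for m unfolding P_def by (rule sets_sub2[OF es_cont])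
  have each: "emeasure lborel (P m) \<le> ennreal c" for m
  proof -
    obtain k where k: "k \<le> D" "\<eta> \<le> cmod (es A d \<omega> k ((-R + real m * \<rho>) + v))" using low by blast
    show ?thesis unfolding P_def c_def \<rho>_def
      by (rule local_sub[OF A k(1) eta del Bm(1) Bm(2)[OF k(1)] k(2)[unfolded \<rho>_def]])
  qed
  have "emeasure lborel {y\<in>{-R..R}. cmod (es A d \<omega> 0 (y + v)) < \<delta>} \<le> emeasure lborel (\<Union>m\<in>{..M}. P m)"
    by (rule emeasure_mono[OF sub]) (use meas in auto)
  also have "\<dots> \<le> (\<Sum>m\<in>{..M}. emeasure lborel (P m))"
    by (rule emeasure_subadditive_finite) (use meas in auto)
  also have "\<dots> \<le> (\<Sum>m\<in>{..M}. ennreal c)" by (intro sum_mono each)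
  also have "\<dots> = ennreal (real (Suc M) * c)"
    using ennreal_of_nat_eq_real_of_nat by (simp add: ennreal_mult' c_def)
  finally show ?thesis unfolding M_def c_def \<rho>_def .
qed



lemma es_levels:
  assumes A: "finite A" and a1: "a1 \<in> A" and d1: "d a1 \<noteq> 0" and inj: "inj_on \<omega> A" and R: "R \<ge> 0"
  shows "\<exists>Z. \<forall>v. (\<Sum>s. emeasure lborel {y\<in>{-R..R}. cmod (es A d \<omega> 0 (y + v)) < exp (- real s)}) \<le> ennreal Z"
proof -
  obtain \<eta> D where eta: "\<eta> > 0" and low: "\<And>x. \<exists>k\<le>D. \<eta> \<le> cmod (es A d \<omega> k x)"
    using es_lower[of A a1 d \<omega>] A a1 d1 inj by blast
  define Bm where "Bm = 1 + (\<Sum>k\<le>D. \<Sum>a\<in>A. cmod (d a) * \<bar>\<omega> a\<bar>^Suc k)"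
  have Bm0: "Bm > 0" unfolding Bm_def by (simp add: add_pos_nonneg sum_nonneg)
  have Bmb: "cmod (es A d \<omega> (Suc k) x) \<le> Bm" if "k \<le> D" for k x
  proof -
    have "cmod (es A d \<omega> (Suc k) x) \<le> (\<Sum>a\<in>A. cmod (d a) * \<bar>\<omega> a\<bar>^Suc k)" by (rule es_bound[OF A])
    also have "\<dots> \<le> (\<Sum>k\<le>D. \<Sum>a\<in>A. cmod (d a) * \<bar>\<omega> a\<bar>^Suc k)"
      using that by (intro member_le_sum[of k "{..D}" "\<lambda>k. \<Sum>a\<in>A. cmod (d a) * \<bar>\<omega> a\<bar>^Suc k"])
        (auto intro: sum_nonneg)
    finally show ?thesis unfolding Bm_def by simp
  qed
  define M where "M = nat \<lceil>2*R/(\<eta>/(4*Bm))\<rceil>"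
  define e where "e = 1 / real (max 1 D)"
  have e0: "e > 0" unfolding e_def by simp
  define K2 where "K2 = real (Suc M) * (12 * 2^D) * (4/\<eta>) powr e"
  have K20: "K2 \<ge> 0" unfolding K2_def by simp
  define \<theta> where "\<theta> = exp (- e)"
  have th: "0 < \<theta>" "\<theta> < 1" unfolding \<theta>_def using e0 by auto
  define s0 where "s0 = nat \<lceil>ln (4/\<eta>)\<rceil>"
  define cs where "cs s = (if s < s0 then 2*R else 0) + K2 * \<theta>^s" for s
  have cs0: "cs s \<ge> 0" for s unfolding cs_def using R K20 th by auto
  have bound: "emeasure lborel {y\<in>{-R..R}. cmod (es A d \<omega> 0 (y + v)) < exp (- real s)} \<le> ennreal (cs s)" for v s
  proof (cases "s < s0")
    case True
    have "emeasure lborel {y\<in>{-R..R}. cmod (es A d \<omega> 0 (y + v)) < exp (- real s)} \<le> emeasure lborel {-R..R}"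
      by (rule emeasure_mono) auto
    also have "\<dots> = ennreal (2*R)" using R by simp
    also have "\<dots> \<le> ennreal (cs s)" unfolding cs_def using True K20 th by (intro ennreal_leI) auto
    finally show ?thesis .
  next
    case False
    have "ln (4/\<eta>) \<le> real s" using False unfolding s0_def by linarith
    hence "exp (ln (4/\<eta>)) \<le> exp (real s)" by simp
    hence "4/\<eta> \<le> exp (real s)" using eta by simp
    hence le: "4 * exp (- real s) \<le> \<eta>" using eta by (simp add: field_simps exp_minus)
    have "emeasure lborel {y\<in>{-R..R}. cmod (es A d \<omega> 0 (y + v)) < exp (- real s)}
      \<le> ennreal (real (Suc M) * (12 * 2^D * (4*exp (- real s)/\<eta>) powr e))"
      unfolding M_def e_def by (rule es_cover[OF A eta low Bm0 Bmb _ le R]) auto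
    also have "(4*exp (- real s)/\<eta>) powr e = (4/\<eta>) powr e * \<theta>^s"
    proof -
      have "(4*exp (- real s)/\<eta>) powr e = (4/\<eta>) powr e * exp (- real s) powr e"
        using eta by (subst powr_mult[symmetric]) (auto simp: field_simps)
      also have "exp (- real s) powr e = \<theta>^s"
        unfolding exp_powr_real \<theta>_def exp_of_nat_mult[symmetric] by (simp add: algebra_simps)
      finally show ?thesis .
    qed
    also have "real (Suc M) * (12 * 2^D * ((4/\<eta>) powr e * \<theta>^s)) \<le> cs s"
      unfolding cs_def K2_def using False by (simp add: algebra_simps)
    finally show ?thesis by (simp add: ennreal_leI)
  qed
  have sums: "cs sums (2*R*real s0 + K2 * (1 / (1 - \<theta>)))"
  proof -
    have "(\<lambda>s. if s < s0 then 2*R else 0) sums (\<Sum>s | s < s0. 2*R)"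
      by (rule sums_If_finite) simp
    moreover have "(\<lambda>s. K2 * \<theta>^s) sums (K2 * (1 / (1 - \<theta>)))"
      by (intro sums_mult geometric_sums) (use th in auto)
    ultimately have "(\<lambda>s. (if s < s0 then 2*R else 0) + K2 * \<theta>^s) sums ((\<Sum>s | s < s0. 2*R) + K2 * (1 / (1 - \<theta>)))"
      by (rule sums_add)
    moreover have "(\<Sum>s | s < s0. 2*R) = 2*R*real s0" by simp
    ultimately show ?thesis unfolding cs_def by (simp add: mult.commute)
  qed
  show ?thesis
  proof (intro exI allI)
    fix v
    have "(\<Sum>s. emeasure lborel {y\<in>{-R..R}. cmod (es A d \<omega> 0 (y + v)) < exp (- real s)}) \<le> (\<Sum>s. ennreal (cs s))"
      by (intro suminf_le bound summableI)
    also have "\<dots> = ennreal (2*R*real s0 + K2 * (1 / (1 - \<theta>)))"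
      by (rule suminf_ennreal_eq[OF cs0 sums])
    finally show "(\<Sum>s. emeasure lborel {y\<in>{-R..R}. cmod (es A d \<omega> 0 (y + v)) < exp (- real s)}) \<le> ennreal (2*R*real s0 + K2 * (1 / (1 - \<theta>)))" .
  qed
qed



lemma recur:
  fixes m q :: "nat \<Rightarrow> real" and W :: "nat \<Rightarrow> real"
  assumes m0: "\<And>n. 0 \<le> m n" and K: "K \<ge> 1" and C: "C \<ge> 0"
    and Wdef: "\<And>n. W n = Max ((\<lambda>i. m (n + i)) ` {..<K})"
    and rel: "\<And>n. q n * m n \<le> C * W (Suc n)"
    and qpos: "\<And>j. j < N \<Longrightarrow> q j > 0"
  shows "W 0 \<le> (\<Prod>j<N. max 1 (C / q j)) * W N"
  using qpos
proof (induction N)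
  case 0 then show ?case by simp
next
  case (Suc N)
  have fin: "finite ((\<lambda>i. m (n + i)) ` {..<K})" "(\<lambda>i. m (n + i)) ` {..<K} \<noteq> {}" for n
    using K by (auto simp: lessThan_empty_iff)
  have W0: "0 \<le> W n" for n
  proof -
    have "m (n + 0) \<in> (\<lambda>i. m (n + i)) ` {..<K}" using K by (intro imageI) auto
    hence "m (n + 0) \<le> W n" unfolding Wdef using fin by (intro Max_ge) auto
    thus ?thesis using m0[of "n+0"] by linarith
  qed
  have qN: "q N > 0" using Suc.prems by auto
  have step: "W N \<le> max 1 (C / q N) * W (Suc N)"
  proof -
    have mN: "m N \<le> (C / q N) * W (Suc N)" using rel[of N] qN by (simp add: field_simps)
    have "m (N + i) \<le> max 1 (C / q N) * W (Suc N)" if "i < K" for i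
    proof (cases i)
      case 0
      have "(C / q N) * W (Suc N) \<le> max 1 (C / q N) * W (Suc N)" using W0 by (intro mult_right_mono) auto
      thus ?thesis using mN 0 by simp
    next
      case (Suc i')
      have "m (N + i) = m (Suc N + i')" using Suc by simp
      also have "\<dots> \<le> W (Suc N)" unfolding Wdef using fin that Suc by (intro Max_ge) auto
      also have "\<dots> = 1 * W (Suc N)" by simp
      also have "\<dots> \<le> max 1 (C / q N) * W (Suc N)" using W0[of "Suc N"] by (intro mult_right_mono) auto
      finally show ?thesis .
    qed
    thus ?thesis unfolding Wdef[of N] using fin by (subst Max_le_iff) auto
  qed
  have "W 0 \<le> (\<Prod>j<N. max 1 (C / q j)) * W N" using Suc by auto
  also have "\<dots> \<le> (\<Prod>j<N. max 1 (C / q j)) * (max 1 (C / q N) * W (Suc N))"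
    by (intro mult_left_mono step prod_nonneg) auto
  also have "\<dots> = (\<Prod>j<Suc N. max 1 (C / q j)) * W (Suc N)" by (simp add: algebra_simps)
  finally show ?case .
qed

definition cnt :: "real \<Rightarrow> ennreal" where
  "cnt r = (\<Sum>s. indicator {r'. r' < exp (- real s)} r)"

lemma cnt_bound:
  assumes x: "x \<ge> 0" and c: "cnt r \<le> ennreal x"
  shows "r > 0 \<and> 1 / r \<le> exp x"
proof -
  define s where "s = nat \<lfloor>x\<rfloor>"
  have "\<not> r < exp (- real s)"
  proof
    assume r: "r < exp (- real s)"
    have "\<And>i. i < Suc s \<Longrightarrow> r < exp (- real i)"
    proof -
      fix i assume "i < Suc s"
      hence "exp (- real s) \<le> exp (- real i)" by simp
      thus "r < exp (- real i)" using r by linarith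
    qed
    hence "(\<Sum>i<Suc s. indicator {r'. r' < exp (- real i)} r) = (\<Sum>i<Suc s. (1::ennreal))"
      by (intro sum.cong) auto
    also have "\<dots> = ennreal (real (Suc s))" by (simp add: ennreal_of_nat_eq_real_of_nat)
    moreover have "(\<Sum>i<Suc s. indicator {r'. r' < exp (- real i)} r) \<le> cnt r" unfolding cnt_def
      by (rule sum_le_suminf[OF summableI]) auto
    ultimately have "ennreal (real (Suc s)) \<le> cnt r" by simp
    hence "ennreal (real (Suc s)) \<le> ennreal x" using c by simp
    hence "real (Suc s) \<le> x" using x ennreal_le_iff by blast
    moreover have "x < real (Suc s)" unfolding s_def using x by linarith
    ultimately show False by simp
  qed
  hence r: "exp (- real s) \<le> r" by simp
  have "exp (- x) \<le> exp (- real s)" unfolding s_def using x by simp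
  hence "exp (- x) \<le> r" using r by linarith
  moreover have "0 < exp (- x)" by simp
  ultimately have rp: "r > 0" by linarith
  have "1 / r \<le> 1 / exp (- x)"
    using \<open>exp (- x) \<le> r\<close> rp by (intro divide_left_mono) auto
  thus ?thesis using rp by (simp add: exp_minus divide_inverse)
qed

lemma prod_bound:
  fixes q :: "nat \<Rightarrow> real"
  assumes X: "X \<ge> 0" and c: "(\<Sum>j<N. cnt (q j)) \<le> ennreal X" and C: "C \<ge> 0"
  shows "(\<forall>j<N. q j > 0) \<and> (\<Prod>j<N. max 1 (C / q j)) \<le> (max 1 C)^N * exp X"
proof -
  define x where "x j = enn2real (cnt (q j))" for j
  have ltop: "cnt (q j) = ennreal (x j)" if "j < N" for j
  proof -
    have "cnt (q j) \<le> (\<Sum>j<N. cnt (q j))" using that by (intro member_le_sum) auto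
    also have "\<dots> < top" using c by (simp add: le_less_trans)
    finally show ?thesis unfolding x_def by (simp add: ennreal_enn2real_if)
  qed
  have x0: "x j \<ge> 0" for j unfolding x_def by simp
  have "ennreal (\<Sum>j<N. x j) = (\<Sum>j<N. ennreal (x j))" using x0 by (rule sum_ennreal[symmetric])
  also have "\<dots> = (\<Sum>j<N. cnt (q j))" using ltop by (intro sum.cong) auto
  finally have "ennreal (\<Sum>j<N. x j) = (\<Sum>j<N. cnt (q j))" .
  hence "ennreal (\<Sum>j<N. x j) \<le> ennreal X" using c by simp
  hence sx: "(\<Sum>j<N. x j) \<le> X" using X by (simp add: ennreal_le_iff)
  have each: "q j > 0 \<and> 1 / q j \<le> exp (x j)" if "j < N" for j
    using cnt_bound[OF x0[of j], of "q j"] ltop[OF that] by simp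
  have "(\<Prod>j<N. max 1 (C / q j)) \<le> (\<Prod>j<N. max 1 C * exp (x j))"
  proof (intro prod_mono conjI)
    fix j assume "j \<in> {..<N}"
    hence e: "q j > 0" "1 / q j \<le> exp (x j)" using each by auto
    show "0 \<le> max 1 (C / q j)" by simp
    have "C / q j = C * (1 / q j)" by simp
    also have "\<dots> \<le> max 1 C * exp (x j)" using e C by (intro mult_mono) auto
    finally have a: "C / q j \<le> max 1 C * exp (x j)" .
    have a1: "1 \<le> max 1 C" by simp
    have a2: "1 \<le> exp (x j)" using x0[of j] by simp
    have "1 * 1 \<le> max 1 C * exp (x j)" by (rule mult_mono[OF a1 a2]) auto
    hence "1 \<le> max 1 C * exp (x j)" by simp
    thus "max 1 (C / q j) \<le> max 1 C * exp (x j)" using a by simp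
  qed
  also have "\<dots> = (max 1 C)^N * exp (\<Sum>j<N. x j)" by (simp add: prod.distrib exp_sum)
  also have "\<dots> \<le> (max 1 C)^N * exp X" using sx by (intro mult_left_mono) auto
  finally show ?thesis using each by auto
qed



lemma core:
  fixes f :: "real \<Rightarrow> complex" and Q :: "real \<Rightarrow> complex"
  assumes fm: "f \<in> borel_measurable lebesgue"
    and decay: "\<forall>c>0. ((\<lambda>x. norm (f x) * exp (c * x)) \<longlongrightarrow> 0) at_top"
    and b: "b > 0" and C: "C \<ge> 0" and K: "K \<ge> 1"
    and Qd: "Q = es A d \<omega> 0" and A: "finite A" "a1 \<in> A" "d a1 \<noteq> 0" "inj_on \<omega> A"
    and rel: "AE y in lebesgue. \<forall>n. cmod (Q (y + real n * b)) * norm (f (y + real n * b))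
                 \<le> C * Max ((\<lambda>i. norm (f (y + real (Suc n + i) * b))) ` {..<K})"
  shows "AE y in lebesgue. f y = 0"
proof -
  have Qc: "continuous_on UNIV (\<lambda>y. cmod (Q (y + v)))" for v unfolding Qd by (rule es_cont)
  have Qm[measurable]: "(\<lambda>y. cmod (Q (y + v))) \<in> borel_measurable borel" for v
    using Qc by (intro borel_measurable_continuous_onI) auto
  have Icc_leb[measurable]: "{a..b} \<in> sets lebesgue" for a b :: real
    by (rule sets_completionI_sets) simp
  have fm'[measurable]: "(\<lambda>y. norm (f y)) \<in> borel_measurable lebesgue" using fm by measurable
  have null: "emeasure lebesgue {y\<in>{- real R..real R}. \<tau> < norm (f y)} = 0" if tau: "\<tau> > 0" for R :: nat and \<tau> :: real
  proof -
    obtain Z0 where Z0: "\<And>v. (\<Sum>s. emeasure lborel {y\<in>{- real R..real R}. cmod (es A d \<omega> 0 (y + v)) < exp (- real s)}) \<le> ennreal Z0"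
    proof -
      have "\<exists>Z. \<forall>v. (\<Sum>s. emeasure lborel {y\<in>{- real R..real R}. cmod (es A d \<omega> 0 (y + v)) < exp (- real s)}) \<le> ennreal Z"
        by (rule es_levels[of A a1 d \<omega>]) (use A in auto)
      thus ?thesis using that by blast
    qed
    define Z where "Z = max Z0 0"
    have Z0': "Z \<ge> 0" unfolding Z_def by simp
    have lev: "(\<Sum>s. emeasure lborel {y\<in>{- real R..real R}. cmod (Q (y + v)) < exp (- real s)}) \<le> ennreal Z" for v
      using Z0[of v] unfolding Qd Z_def by (meson ennreal_leI max.cobounded1 order.trans)
    define \<mu> where "\<mu> = emeasure lebesgue {y\<in>{- real R..real R}. \<tau> < norm (f y)}"
    have bnd: "\<mu> \<le> ennreal (Z / L)" if L: "L > 0" for L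
    proof -
      define M1 where "M1 = max 1 C"
      have M1: "M1 \<ge> 1" unfolding M1_def by simp
      define c0 where "c0 = (ln M1 + L + 1) / b"
      have c0: "c0 > 0" unfolding c0_def using M1 L b by (simp add: add_nonneg_pos)
      have "eventually (\<lambda>x. norm (f x) * exp (c0 * x) < 1) at_top"
        using decay c0 by (intro order_tendstoD(2)) auto
      then obtain X0 where X0: "\<And>x. x \<ge> X0 \<Longrightarrow> norm (f x) * exp (c0 * x) < 1"
        unfolding eventually_at_top_linorder by blast
      define N where "N = nat \<lceil>max ((X0 + real R) / b) (c0 * real R - ln \<tau>)\<rceil> + 1"
      have N1: "N \<ge> 1" unfolding N_def by simp
      have NX: "X0 + real R \<le> real N * b"
      proof -
        have "(X0 + real R) / b \<le> real N" unfolding N_def by linarith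
        thus ?thesis using b by (simp add: field_simps)
      qed
      have Nt: "c0 * real R - ln \<tau> < real N" unfolding N_def by linarith
      define E where "E j s = {y. cmod (Q (y + real j * b)) < exp (- real s)}" for j s :: nat
      have Em[measurable]: "E j s \<in> sets borel" for j s unfolding E_def by measurable
      define FN where "FN y = (\<Sum>j<N. \<Sum>s. indicator (E j s) y :: ennreal)" for y
      have FNc: "FN y = (\<Sum>j<N. cnt (cmod (Q (y + real j * b))))" for y
        unfolding FN_def cnt_def E_def by (simp add: indicator_def)
      have claim1: "AE y in lebesgue. y \<in> {y\<in>{- real R..real R}. \<tau> < norm (f y)}
           \<longrightarrow> y \<in> {y\<in>{- real R..real R}. ennreal (L * real N) \<le> FN y}"
        using rel
      proof (eventually_elim)
        case (elim y)
        show ?case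
        proof (rule impI, rule ccontr)
          assume yin: "y \<in> {y\<in>{- real R..real R}. \<tau> < norm (f y)}"
            and nin: "y \<notin> {y\<in>{- real R..real R}. ennreal (L * real N) \<le> FN y}"
          hence FNl: "FN y \<le> ennreal (L * real N)" using yin by auto
          define q where "q j = cmod (Q (y + real j * b))" for j :: nat
          define m where "m n = norm (f (y + real n * b))" for n :: nat
          define W where "W n = Max ((\<lambda>i. m (n + i)) ` {..<K})" for n
          have pb: "(\<forall>j<N. q j > 0) \<and> (\<Prod>j<N. max 1 (C / q j)) \<le> (max 1 C)^N * exp (L * real N)"
            by (rule prod_bound) (use FNl L C in \<open>auto simp: FNc q_def\<close>)
          have rec: "W 0 \<le> (\<Prod>j<N. max 1 (C / q j)) * W N"
          proof (rule recur[OF _ K C])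
            show "\<And>n. 0 \<le> m n" unfolding m_def by simp
            show "\<And>n. W n = Max ((\<lambda>i. m (n + i)) ` {..<K})" unfolding W_def ..
            show "\<And>n. q n * m n \<le> C * W (Suc n)"
              using elim unfolding q_def m_def W_def by (simp add: add.commute)
            show "\<And>j. j < N \<Longrightarrow> 0 < q j" using pb by auto
          qed
          have fin: "finite ((\<lambda>i. m (n + i)) ` {..<K})" "(\<lambda>i. m (n + i)) ` {..<K} \<noteq> {}" for n
            using K by (auto simp: lessThan_empty_iff)
          have WN: "W N \<le> exp (- c0 * (real N * b - real R))"
            unfolding W_def
          proof (subst Max_le_iff[OF fin], clarify)
            fix i assume "i < K"
            define x where "x = y + real (N + i) * b"
            have ib: "0 \<le> real i * b" using b by simp
            have "x \<ge> - real R + real N * b" unfolding x_def using yin ib by (auto simp: algebra_simps)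
            hence x1: "x \<ge> X0" and x2: "x \<ge> real N * b - real R" using NX by auto
            have "norm (f x) * exp (c0 * x) < 1" using X0[OF x1] .
            hence "norm (f x) < exp (- (c0 * x))" by (simp add: exp_minus field_simps)
            also have "\<dots> \<le> exp (- c0 * (real N * b - real R))" using x2 c0 by simp
            finally show "m (N + i) \<le> exp (- c0 * (real N * b - real R))" unfolding m_def x_def by simp
          qed
          have W0: "norm (f y) \<le> W 0"
          proof -
            have "m (0 + 0) \<in> (\<lambda>i. m (0 + i)) ` {..<K}" using K by (intro imageI) auto
            hence "m (0 + 0) \<le> W 0" unfolding W_def using fin by (intro Max_ge) auto
            thus ?thesis unfolding m_def by simp
          qed
          have WNn: "0 \<le> W N" using fin[of N] unfolding W_def
            by (metis (no_types, lifting) Max_ge_iff ex_in_conv imageE m_def norm_ge_zero)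
          have "norm (f y) \<le> (\<Prod>j<N. max 1 (C / q j)) * W N" using W0 rec by linarith
          also have "\<dots> \<le> ((max 1 C)^N * exp (L * real N)) * exp (- c0 * (real N * b - real R))"
            using pb WN WNn by (intro mult_mono) (auto intro: prod_nonneg)
          also have "\<dots> = exp (- real N + c0 * real R)"
          proof -
            have "(max 1 C)^N = exp (real N * ln M1)" using M1 unfolding M1_def
              by (simp add: exp_of_nat_mult)
            moreover have "c0 * b = ln M1 + L + 1" unfolding c0_def using b by simp
            hence e: "c0 * (real N * b) = real N * (ln M1 + L + 1)" by (metis mult.commute mult.left_commute)
            have arg: "real N * ln M1 + L * real N + (- c0 * (real N * b - real R)) = - real N + c0 * real R"
              using e by (simp add: right_diff_distrib distrib_left algebra_simps)
            ultimately show ?thesis unfolding M1_def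
              by (simp add: exp_add[symmetric] arg[symmetric])
          qed
          also have "\<dots> < exp (ln \<tau>)" using Nt by simp
          also have "\<dots> = \<tau>" using tau by simp
          finally show False using yin by simp
        qed
      qed
      define cc where "cc = ennreal (1 / (L * real N))"
      define I where "I = {- real R..real R}"
      have FNb[measurable]: "FN \<in> borel_measurable lborel" unfolding FN_def by measurable
      have FNl[measurable]: "FN \<in> borel_measurable lebesgue" by (rule measurable_completion[OF FNb])
      have FNIl: "(\<lambda>x. FN x * indicator I x) \<in> borel_measurable lebesgue" unfolding I_def by measurable
      have Bm: "{y\<in>I. 1 \<le> cc * FN y} \<in> sets lebesgue" unfolding I_def by measurable
      have LN: "L * real N > 0" using L N1 by simp
      have s1: "\<mu> \<le> emeasure lebesgue {y\<in>I. 1 \<le> cc * FN y}"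
        unfolding \<mu>_def
      proof (rule emeasure_mono_AE[OF _ Bm])
        show "AE x in lebesgue. x \<in> {y\<in>{- real R..real R}. \<tau> < norm (f y)} \<longrightarrow> x \<in> {y\<in>I. 1 \<le> cc * FN y}"
          using claim1
        proof eventually_elim
          case (elim x)
          show ?case
          proof
            assume "x \<in> {y\<in>{- real R..real R}. \<tau> < norm (f y)}"
            hence x: "x \<in> I" "ennreal (L * real N) \<le> FN x" using elim unfolding I_def by auto
            have "1 = cc * ennreal (L * real N)" unfolding cc_def using LN L N1
              by (simp add: ennreal_mult''[symmetric])
            also have "\<dots> \<le> cc * FN x" using x(2) by (rule mult_left_mono) simp
            finally show "x \<in> {y\<in>I. 1 \<le> cc * FN y}" using x(1) by simp
          qed
        qed
      qed
      have s2: "emeasure lebesgue {y\<in>I. 1 \<le> cc * FN y} \<le> cc * (\<integral>\<^sup>+ x. FN x * indicator I x \<partial>lebesgue)"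
        by (rule nn_integral_Markov_inequality[OF FNIl]) (simp add: I_def)
      have s3: "(\<integral>\<^sup>+ x. FN x * indicator I x \<partial>lebesgue) = (\<integral>\<^sup>+ x. FN x * indicator I x \<partial>lborel)"
        by (rule nn_integral_completion)
      have s4: "(\<integral>\<^sup>+ x. FN x * indicator I x \<partial>lborel) = (\<Sum>j<N. \<Sum>s. emeasure lborel (E j s \<inter> I))"
      proof -
        have "(\<integral>\<^sup>+ x. FN x * indicator I x \<partial>lborel) = (\<integral>\<^sup>+ x. (\<Sum>j<N. \<Sum>s. indicator (E j s \<inter> I) x) \<partial>lborel)"
          unfolding FN_def by (simp add: sum_distrib_right indicator_inter_arith)
        also have "\<dots> = (\<Sum>j<N. \<integral>\<^sup>+ x. (\<Sum>s. indicator (E j s \<inter> I) x) \<partial>lborel)"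
          by (rule nn_integral_sum) (unfold I_def, measurable)
        also have "\<dots> = (\<Sum>j<N. \<Sum>s. \<integral>\<^sup>+ x. indicator (E j s \<inter> I) x \<partial>lborel)"
          by (intro sum.cong refl nn_integral_suminf) (unfold I_def, measurable)
        also have "\<dots> = (\<Sum>j<N. \<Sum>s. emeasure lborel (E j s \<inter> I))"
          by (intro sum.cong refl suminf_cong nn_integral_indicator) (unfold I_def, measurable)
        finally show ?thesis .
      qed
      have s5: "(\<Sum>j<N. \<Sum>s. emeasure lborel (E j s \<inter> I)) \<le> ennreal (real N * Z)"
      proof -
        have "(\<Sum>j<N. \<Sum>s. emeasure lborel (E j s \<inter> I)) \<le> (\<Sum>j<N. ennreal Z)"
        proof (rule sum_mono)
          fix j assume "j \<in> {..<N}"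
          have "E j s \<inter> I = {y\<in>{- real R..real R}. cmod (Q (y + real j * b)) < exp (- real s)}" for s
            unfolding E_def I_def by auto
          thus "(\<Sum>s. emeasure lborel (E j s \<inter> I)) \<le> ennreal Z" using lev[of "real j * b"] by simp
        qed
        also have "\<dots> = ennreal (real N * Z)" using Z0' by (simp add: ennreal_mult' ennreal_of_nat_eq_real_of_nat)
        finally show ?thesis .
      qed
      have s6: "cc * ennreal (real N * Z) = ennreal (Z / L)"
        unfolding cc_def using LN Z0' N1 by (simp add: ennreal_mult''[symmetric])
      have "\<mu> \<le> cc * (\<integral>\<^sup>+ x. FN x * indicator I x \<partial>lborel)" using s1 s2 s3 by simp
      also have "\<dots> \<le> cc * ennreal (real N * Z)" using s4 s5 by (simp add: mult_left_mono)
      also have "\<dots> = ennreal (Z / L)" by (rule s6)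
      finally show ?thesis .
    qed
    have "\<mu> \<le> ennreal Z" using bnd[of 1] by simp
    then obtain m where m: "\<mu> = ennreal m" "m \<ge> 0" by (cases \<mu> rule: ennreal_cases) (auto simp: top_unique)
    show ?thesis
    proof (rule ccontr)
      assume "emeasure lebesgue {y\<in>{- real R..real R}. \<tau> < norm (f y)} \<noteq> 0"
      hence mp: "m > 0" using m unfolding \<mu>_def by auto
      define L where "L = 2 * (Z + 1) / m"
      have Lp: "L > 0" unfolding L_def using mp Z0' by simp
      have "ennreal m \<le> ennreal (Z / L)" using bnd[OF Lp] m by simp
      hence "m \<le> Z / L" using Z0' Lp by (simp add: ennreal_le_iff)
      also have "Z / L = Z * m / (2 * (Z + 1))" unfolding L_def using mp Z0' by (simp add: field_simps)
      also have "\<dots> < m" using mp Z0' by (simp add: field_simps add_nonneg_pos)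
      finally show False by simp
    qed
  qed
  define Nn where "Nn R t = {y\<in>{- real R..real R}. 1 / real (Suc t) < norm (f y)}" for R t :: nat
  have Nns: "Nn R t \<in> null_sets lebesgue" for R t
  proof -
    have "Nn R t = {- real R..real R} \<inter> {y. 1 / real (Suc t) < norm (f y)}" unfolding Nn_def by auto
    moreover have "{y. 1 / real (Suc t) < norm (f y)} \<in> sets lebesgue"
      using fm' unfolding borel_measurable_iff_greater by simp
    ultimately have "Nn R t \<in> sets lebesgue" by simp
    moreover have "emeasure lebesgue (Nn R t) = 0" unfolding Nn_def by (rule null) simp
    ultimately show ?thesis by (simp add: null_sets_def)
  qed
  have "(\<Union>R. \<Union>t. Nn R t) \<in> null_sets lebesgue" using Nns by (intro null_sets_UN) auto
  moreover have "{y. \<not> f y = 0} \<subseteq> (\<Union>R. \<Union>t. Nn R t)"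
  proof
    fix y assume "y \<in> {y. \<not> f y = 0}"
    hence fy: "norm (f y) > 0" by simp
    obtain t where t: "inverse (real (Suc t)) < norm (f y)" using reals_Archimedean[OF fy] by blast
    define R where "R = nat \<lceil>\<bar>y\<bar>\<rceil>"
    have "y \<in> {- real R..real R}" unfolding R_def by (auto; linarith)
    hence "y \<in> Nn R t" unfolding Nn_def using t by (simp add: inverse_eq_divide)
    thus "y \<in> (\<Union>R. \<Union>t. Nn R t)" by blast
  qed
  ultimately show ?thesis by (intro AE_I'[of "\<Union>R. \<Union>t. Nn R t"]) auto
qed




lemma AE_shift:
  fixes P :: "real \<Rightarrow> bool"
  assumes "AE x in lebesgue. P x"
  shows "AE y in lebesgue. P (y + t)"
proof -
  have "AE x in lborel. P x" using assms by (simp add: AE_completion_iff)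
  then obtain N where N: "{x. \<not> P x} \<subseteq> N" "N \<in> sets borel" "emeasure lborel N = 0" by (rule AE_E) auto
  have "AE x in lborel. x \<notin> N" using N by (intro AE_not_in) (auto simp: null_sets_def)
  hence "AE x in lborel. t + 1 * x \<notin> N" using N(2) by (intro AE_borel_affine) auto
  hence "AE x in lborel. P (x + t)" by (rule AE_mp) (use N(1) in \<open>auto simp: add.commute\<close>)
  thus ?thesis by (rule AE_completion)
qed

lemma MT_norm: "norm (MT a t f x) = norm (f (x - t))"
proof -
  have "Re (2 * complex_of_real pi * \<i> * complex_of_real a * complex_of_real x) = 0" by simp
  thus ?thesis unfolding MT_def by (simp add: norm_mult norm_exp_eq_Re)
qed

lemma MT_shift:
  "c * MT a t f (z + t) = (c * exp (2 * complex_of_real pi * \<i> * complex_of_real a * complex_of_real t))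
      * exp (\<i> * complex_of_real (2 * pi * a) * complex_of_real z) * f z"
proof -
  have "2 * complex_of_real pi * \<i> * complex_of_real a * complex_of_real (z + t)
     = 2 * complex_of_real pi * \<i> * complex_of_real a * complex_of_real t + \<i> * complex_of_real (2 * pi * a) * complex_of_real z"
    by (simp add: algebra_simps)
  thus ?thesis unfolding MT_def by (simp add: exp_add)
qed

theorem theorem3p3:
  fixes f :: "real \<Rightarrow> complex"
  assumes "f \<in> borel_measurable lebesgue"
    and "\<not> (AE x in lebesgue. f x = 0)"
    and "\<forall>c>0. ((\<lambda>x. norm (f x) * exp (c * x)) \<longlongrightarrow> 0) at_top"
  shows "\<forall>b>0. gabor_lin_indep f b"
proof (intro allI impI)
  fix b :: real assume b: "b > 0"
  show "gabor_lin_indep f b" unfolding gabor_lin_indep_def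
  proof (intro allI impI)
    fix S and c :: "real \<times> real \<Rightarrow> complex"
    assume H: "finite S \<and> S \<subseteq> UNIV \<times> {t. \<exists>k::int. t = b * of_int k} \<and> (\<exists>p\<in>S. c p \<noteq> 0)"
    show "\<not> (AE x in lebesgue. (\<Sum>p\<in>S. c p * MT (fst p) (snd p) f x) = 0)"
    proof
      assume ae: "AE x in lebesgue. (\<Sum>p\<in>S. c p * MT (fst p) (snd p) f x) = 0"
      define S' where "S' = {p\<in>S. c p \<noteq> 0}"
      have finS': "finite S'" unfolding S'_def using H by auto
      have S'ne: "S' \<noteq> {}" unfolding S'_def using H by auto
      have kof: "\<exists>k::int. snd p = b * of_int k" if "p \<in> S" for p using H that by auto
      have sumS': "(\<Sum>p\<in>S. c p * MT (fst p) (snd p) f x) = (\<Sum>p\<in>S'. c p * MT (fst p) (snd p) f x)" for x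
        unfolding S'_def using H by (intro sum.mono_neutral_right) auto
      define tm where "tm = Max (snd ` S')"
      define tmin where "tmin = Min (snd ` S')"
      have tmin: "tmin \<le> snd p" if "p \<in> S'" for p unfolding tmin_def using finS' that by auto
      have tmax: "snd p \<le> tm" if "p \<in> S'" for p unfolding tm_def using finS' that by auto
      have "tm \<in> snd ` S'" unfolding tm_def using finS' S'ne by (intro Max_in) auto
      then obtain p0 where p0: "p0 \<in> S'" "snd p0 = tm" by auto
      define A where "A = {p\<in>S'. snd p = tm}"
      have finA: "finite A" unfolding A_def using finS' by auto
      have p0A: "p0 \<in> A" unfolding A_def using p0 by auto
      define \<omega> where "\<omega> p = 2 * pi * fst p" for p :: "real \<times> real"
      define d where "d p = c p * exp (2 * complex_of_real pi * \<i> * complex_of_real (fst p) * complex_of_real tm)" for p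
      have d0: "d p0 \<noteq> 0" unfolding d_def using p0 unfolding S'_def by auto
      have inj: "inj_on \<omega> A" unfolding inj_on_def \<omega>_def A_def by (auto intro: prod_eqI)
      define Q where "Q = es A d \<omega> 0"
      have Aid: "(\<Sum>p\<in>A. c p * MT (fst p) (snd p) f (z + tm)) = Q z * f z" for z
      proof -
        have "(\<Sum>p\<in>A. c p * MT (fst p) (snd p) f (z + tm)) = (\<Sum>p\<in>A. d p * exp (\<i> * complex_of_real (\<omega> p) * complex_of_real z) * f z)"
          by (intro sum.cong refl) (auto simp: A_def d_def \<omega>_def MT_shift)
        also have "\<dots> = Q z * f z" unfolding Q_def es_def by (simp add: sum_distrib_right)
        finally show ?thesis .
      qed
      define K where "K = nat \<lceil>(tm - tmin) / b\<rceil> + 1"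
      have K1: "K \<ge> 1" unfolding K_def by simp
      define C where "C = (\<Sum>p\<in>S'. cmod (c p))"
      have C0: "C \<ge> 0" unfolding C_def by (simp add: sum_nonneg)
      have offs: "\<exists>i<K. z + tm - snd p = z + real (Suc i) * b" if p: "p \<in> S' - A" for p z
      proof -
        have pS: "p \<in> S" "p0 \<in> S" using p p0 unfolding S'_def by auto
        obtain kp where kp: "snd p = b * of_int kp" using kof[OF pS(1)] by blast
        obtain km where km: "tm = b * of_int km" using kof[OF pS(2)] p0(2) by auto
        have "snd p \<le> tm" "snd p \<noteq> tm" using tmax[of p] p unfolding A_def by auto
        hence lt: "snd p < tm" by simp
        hence "kp < km" using b kp km by (simp add: mult_less_cancel_left_pos)
        define i where "i = nat (km - kp - 1)"
        have ii: "real (Suc i) = of_int km - of_int kp" unfolding i_def using \<open>kp < km\<close> by simp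
        have "tmin \<le> snd p" using tmin[of p] p by auto
        hence "b * (of_int km - of_int kp) \<le> tm - tmin" using kp km by (simp add: algebra_simps)
        hence "of_int km - of_int kp \<le> (tm - tmin) / b" using b by (simp add: field_simps)
        hence "real (Suc i) \<le> of_int \<lceil>(tm - tmin) / b\<rceil>" using ii by linarith
        hence "i < K" unfolding K_def by linarith
        moreover have "z + tm - snd p = z + real (Suc i) * b" unfolding ii using kp km by (simp add: algebra_simps)
        ultimately show ?thesis by blast
      qed
      have rel: "AE y in lebesgue. \<forall>n. cmod (Q (y + real n * b)) * norm (f (y + real n * b))
                 \<le> C * Max ((\<lambda>i. norm (f (y + real (Suc n + i) * b))) ` {..<K})"
      proof -
        have "AE y in lebesgue. \<forall>n::nat. (\<Sum>p\<in>S. c p * MT (fst p) (snd p) f (y + (real n * b + tm))) = 0"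
          unfolding AE_all_countable by (intro allI AE_shift[OF ae])
        thus ?thesis
        proof eventually_elim
          case (elim y)
          show ?case
          proof
            fix n :: nat
            define z where "z = y + real n * b"
            define Wm where "Wm = Max ((\<lambda>i. norm (f (y + real (Suc n + i) * b))) ` {..<K})"
            have fin: "finite ((\<lambda>i. norm (f (y + real (Suc n + i) * b))) ` {..<K})" by simp
            have Wm0: "Wm \<ge> 0"
            proof -
              have "norm (f (y + real (Suc n + 0) * b)) \<in> (\<lambda>i. norm (f (y + real (Suc n + i) * b))) ` {..<K}"
                using K1 by (intro imageI) auto
              hence "norm (f (y + real (Suc n + 0) * b)) \<le> Wm" unfolding Wm_def using fin by (intro Max_ge) auto
              thus ?thesis by (meson norm_ge_zero order.trans)
            qed
            have eq0: "(\<Sum>p\<in>S'. c p * MT (fst p) (snd p) f (z + tm)) = 0"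
              using elim[rule_format, of n] sumS' unfolding z_def by (simp add: add.assoc)
            have split: "(\<Sum>p\<in>S'. c p * MT (fst p) (snd p) f (z + tm))
                = (\<Sum>p\<in>S'-A. c p * MT (fst p) (snd p) f (z + tm)) + (\<Sum>p\<in>A. c p * MT (fst p) (snd p) f (z + tm))"
              using finS' by (intro sum.subset_diff) (auto simp: A_def)
            have "Q z * f z = - (\<Sum>p\<in>S'-A. c p * MT (fst p) (snd p) f (z + tm))"
              using eq0 split Aid[of z] by (simp add: eq_neg_iff_add_eq_0 add.commute)
            hence "cmod (Q z) * norm (f z) = norm (\<Sum>p\<in>S'-A. c p * MT (fst p) (snd p) f (z + tm))"
              by (metis norm_minus_cancel norm_mult)
            also have "\<dots> \<le> (\<Sum>p\<in>S'-A. cmod (c p) * norm (f (z + tm - snd p)))"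
              by (rule order.trans[OF norm_sum]) (simp add: norm_mult MT_norm)
            also have "\<dots> \<le> (\<Sum>p\<in>S'-A. cmod (c p) * Wm)"
            proof (rule sum_mono, rule mult_left_mono)
              fix p assume p: "p \<in> S' - A"
              obtain i where i: "i < K" "z + tm - snd p = z + real (Suc i) * b" using offs[OF p] by blast
              have "z + real (Suc i) * b = y + real (Suc n + i) * b" unfolding z_def by (simp add: algebra_simps)
              hence e: "z + tm - snd p = y + real (Suc n + i) * b" using i(2) by simp
              show "norm (f (z + tm - snd p)) \<le> Wm" unfolding e Wm_def using fin i(1) by (intro Max_ge) auto
            qed simp
            also have "\<dots> = (\<Sum>p\<in>S'-A. cmod (c p)) * Wm" by (simp add: sum_distrib_right)
            also have "\<dots> \<le> C * Wm" unfolding C_def using Wm0 finS'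
              by (intro mult_right_mono sum_mono2) auto
            finally show "cmod (Q (y + real n * b)) * norm (f (y + real n * b)) \<le> C * Wm" unfolding z_def .
          qed
        qed
      qed
      have "AE y in lebesgue. f y = 0"
        by (rule core[OF assms(1) assms(3) b C0 K1 Q_def finA p0A d0 inj rel])
      thus False using assms(2) by simp
    qed
  qed
qed


end
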